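(* Let $\ell\ge 1$, $c\ge 1$ and $s\ge 1$ be integers, and let $\underline{\eta}=(\eta_1,\dots,\eta_s)$ be integer thresholds with $1\le \eta_1<\eta_2<\dots<\eta_s\le \ell$. For $x\in\{0,\dots,\ell\}$ let $o(x)=0^{\ell-x}1^{x}$ and $u(x)=1^{x}0^{\ell-x}$ (words of length $\ell$), and for a word $w$ let $w^{c}$ denote the concatenation of $c$ copies of $w$. Define the binary word $$p(c)=o(0)^{c}\;\,0\,o(\eta_1)^{c}\;\,0\,o(\eta_2)^{c}\cdots 0\,o(\eta_s)^{c}\;\,1\,u(\ell)^{c}\;\,1\,u(\eta_s-1)^{c}\;\,1\,u(\eta_{s-1}-1)^{c}\cdots 1\,u(\eta_1-1)^{c}\;\,0,$$ which has length $(2s+2)(c\ell+1)$, and let $v=(v_t)_{t\ge 0}$ be the infinite periodic binary sequence $p(c)p(c)p(c)\cdots$. Let $q=(q_0,\dots,q_{2s+1})=(0,1,\dots,s,s,s-1,\dots,1,0)$. Then for every integer $i\ge 0$, $$\underline{\eta}\Big(\sum_{t=i}^{i+\ell-1} v_t\Big)=q_{\lfloor i/(c\ell+1)\rfloor \bmod (2s+2)}.$$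
   Context: For thresholds $\underline{\eta}=(\eta_1<\dots<\eta_s)$ (positive integers), the SQGT outcome of a nonnegative integer $y$ is $\underline{\eta}(y)=|\{k\in\{1,\dots,s\}:\eta_k\le y\}|\in\{0,\dots,s\}$. The sum $\sum_{t=i}^{i+\ell-1}v_t$ is the inner product of the test $v$ with the length-$\ell$ burst (consecutive block of ones) occupying positions $i,\dots,i+\ell-1$. *)

theory Defs
  imports Main
begin

definition sqgt :: "(nat \<Rightarrow> nat) \<Rightarrow> nat \<Rightarrow> nat \<Rightarrow> nat" where
  "sqgt eta s y = card {k \<in> {1..s}. eta k \<le> y}"

definition o_word :: "nat \<Rightarrow> nat \<Rightarrow> nat list" where
  "o_word l x = replicate (l - x) 0 @ replicate x 1"

definition u_word :: "nat \<Rightarrow> nat \<Rightarrow> nat list" where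
  "u_word l x = replicate x 1 @ replicate (l - x) 0"

definition wpow :: "nat list \<Rightarrow> nat \<Rightarrow> nat list" where
  "wpow w c = concat (replicate c w)"

definition p_word :: "nat \<Rightarrow> nat \<Rightarrow> nat \<Rightarrow> (nat \<Rightarrow> nat) \<Rightarrow> nat list" where
  "p_word l c s eta =
     wpow (o_word l 0) c
     @ concat (map (\<lambda>k. 0 # wpow (o_word l (eta k)) c) [1..<s+1])
     @ (1 # wpow (u_word l l) c)
     @ concat (map (\<lambda>k. 1 # wpow (u_word l (eta k - 1)) c) (rev [1..<s+1]))
     @ [0]"

definition v_seq :: "nat \<Rightarrow> nat \<Rightarrow> nat \<Rightarrow> (nat \<Rightarrow> nat) \<Rightarrow> nat \<Rightarrow> nat" where
  "v_seq l c s eta t = (let p = p_word l c s eta in p ! (t mod length p))"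

definition q_seq :: "nat \<Rightarrow> nat \<Rightarrow> nat" where
  "q_seq s j = (if j \<le> s then j else 2 * s + 1 - j)"

end

theory Submission
  imports Defs
begin


lemma nth_wpow: "length w = l \<Longrightarrow> k < c*l \<Longrightarrow> wpow w c ! k = w ! (k mod l)"
proof (induction c arbitrary: k)
  case 0 then show ?case by simp
next
  case (Suc c)
  have "wpow w (Suc c) = w @ wpow w c" by (simp add: wpow_def)
  moreover have "length (wpow w c) = c*l" using Suc.prems by (simp add: wpow_def length_concat sum_list_replicate)
  ultimately show ?case using Suc
    by (cases "k < l") (auto simp: nth_append mod_if)
qed

lemma length_wpow: "length w = l \<Longrightarrow> length (wpow w c) = c*l"
  by (simp add: wpow_def length_concat sum_list_replicate)

lemma nth_concat_blocks:
  assumes "\<And>j. j < N \<Longrightarrow> length (D j) = L" "k < N*L"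
  shows "concat (map D [0..<N]) ! k = D (k div L) ! (k mod L)"
  using assms
proof (induction N arbitrary: k)
  case 0 then show ?case by simp
next
  case (Suc N)
  have len: "length (concat (map D [0..<N])) = N*L"
    using Suc.prems(1) by (induction N) auto
  show ?case
  proof (cases "k < N*L")
    case True then show ?thesis using Suc len by (simp add: nth_append)
  next
    case False
    then obtain m where m: "k = m + N*L" "m < L" using Suc.prems(2)
      by (metis add.commute le_add_diff_inverse mult_Suc nat_add_left_cancel_less not_less)
    then have "k div L = N" "k mod L = k - N*L" by auto
    then show ?thesis using False len by (simp add: nth_append)
  qed
qed

lemma periodic_sum:
  fixes f :: "nat \<Rightarrow> nat"
  assumes "l \<ge> 1"
  shows "(\<Sum>k=b..<b+l. f (k mod l)) = (\<Sum>k<l. f k)"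
proof (induction b)
  case 0 then show ?case
    by (simp add: atLeast0LessThan)
next
  case (Suc b)
  have "(\<Sum>k=b..<Suc (b+l). f (k mod l)) = f (b mod l) + (\<Sum>k=Suc b..<Suc b+l. f (k mod l))"
    by (subst sum.atLeast_Suc_lessThan) auto
  moreover have "(\<Sum>k=b..<Suc (b+l). f (k mod l)) = (\<Sum>k=b..<b+l. f (k mod l)) + f ((b+l) mod l)"
    by simp
  ultimately show ?case using Suc by simp
qed

lemma ind_ge_sum: "(\<Sum>k=a..<b. (if t \<le> k then 1 else 0::nat)) = b - max a t"
  by (induction b) (auto simp: max_def)

lemma ind_lt_sum: "(\<Sum>k=a..<b. (if k < t then 1 else 0::nat)) = min b t - a"
  by (induction b) (auto simp: min_def)



lemma window:
  fixes L N l c i :: nat and sp :: "nat \<Rightarrow> nat" and bv :: "nat \<Rightarrow> nat \<Rightarrow> nat"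
  assumes L: "L = c*l+1" and l1: "l \<ge> 1" and c1: "c \<ge> 1"
  and G: "\<And>n. G n = (if n mod L = 0 then sp ((n div L) mod N) else bv ((n div L) mod N) ((n mod L - 1) mod l))"
  shows "(\<Sum>n=i+1..<i+1+l. G n) = (if i mod L + l \<le> c*l then (\<Sum>k<l. bv ((i div L) mod N) k)
     else (\<Sum>k=i mod L + l - c*l..<l. bv ((i div L) mod N) k) + sp ((i div L + 1) mod N)
       + (\<Sum>k<i mod L + l - c*l - 1. bv ((i div L + 1) mod N) k))"
proof -
  define j where "j = i div L"
  define r where "r = i mod L"
  have Lpos: "L > 0" using L by simp
  have i: "i = r + j*L" using j_def r_def by simp
  have rL: "r < L" using r_def Lpos by simp
  have Gin: "G (k + j*L + 1) = bv (j mod N) (k mod l)" if "k < c*l" for k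
  proof -
    have e: "(k + j*L + 1) = (k+1) + j*L" by simp
    have "k+1 < L" using that L by simp
    then have "(k + j*L + 1) mod L = k+1" "(k + j*L + 1) div L = j" unfolding e
      using div_mult_self1[of L "k+1" j] Lpos by simp_all
    then show ?thesis using G by simp
  qed
  have shift: "(\<Sum>n=a+(j*L+1)..<b+(j*L+1). G n) = (\<Sum>k=a..<b. G (k + j*L + 1))" for a b
    by (subst sum.shift_bounds_nat_ivl) (simp add: add.assoc)
  show ?thesis
  proof (cases "r + l \<le> c*l")
    case True
    have "(\<Sum>n=i+1..<i+1+l. G n) = (\<Sum>k=r..<r+l. G (k + j*L + 1))"
    proof -
      have e1: "i+1 = r + (j*L+1)" "i+1+l = (r+l) + (j*L+1)" using i by simp_all
      show ?thesis by (subst e1(2), subst e1(1), rule shift)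
    qed
    also have "\<dots> = (\<Sum>k=r..<r+l. bv (j mod N) (k mod l))"
      using True Gin by (intro sum.cong) auto
    also have "\<dots> = (\<Sum>k<l. bv (j mod N) k)" using periodic_sum l1 by blast
    finally show ?thesis using True j_def r_def by simp
  next
    case False
    define d where "d = r + l - c*l"
    have d1: "d \<ge> 1" "d \<le> l" using False rL L d_def by auto
    have "(\<Sum>n=i+1..<i+1+l. G n) = (\<Sum>n=i+1..<(j+1)*L. G n) + (\<Sum>n=(j+1)*L..<i+1+l. G n)"
      using False rL L i by (intro sum.atLeastLessThan_concat[symmetric]) auto
    also have "(\<Sum>n=(j+1)*L..<i+1+l. G n) = G ((j+1)*L) + (\<Sum>n=(j+1)*L+1..<i+1+l. G n)"
      using False rL L i by (subst sum.atLeast_Suc_lessThan) auto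
    also have "(\<Sum>n=i+1..<(j+1)*L. G n) = (\<Sum>k=r..<c*l. G (k + j*L + 1))"
    proof -
      have e1: "i+1 = r + (j*L+1)" "(j+1)*L = c*l + (j*L+1)" using i L by simp_all
      show ?thesis unfolding e1 by (rule shift)
    qed
    also have "\<dots> = (\<Sum>k=r..<c*l. bv (j mod N) ((k + l - c*l)))"
    proof (intro sum.cong refl)
      fix k assume k: "k \<in> {r..<c*l}"
      have "k mod l = k + l - c*l"
      proof -
        have "k = (k + l - c*l) + (c-1)*l" using k False c1 by (auto simp: diff_mult_distrib)
        moreover have "k + l - c*l < l" using k l1 by auto
        ultimately show ?thesis by (metis mod_mult_self1 mod_less)
      qed
      then show "G (k + j * L + 1) = bv (j mod N) (k + l - c * l)" using Gin k by auto
    qed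
    also have "\<dots> = (\<Sum>k=d..<l. bv (j mod N) k)"
    proof -
      define E where "E = c*l - l"
      have cl: "c*l \<ge> l" using c1 by simp
      have e: "r = d + E" "c*l = l + E" using d_def E_def False cl by auto
      have "(\<Sum>k=r..<c*l. bv (j mod N) ((k + l - c*l))) = (\<Sum>k=d+E..<l+E. bv (j mod N) ((k + l - c*l)))"
        using e by simp
      also have "\<dots> = (\<Sum>k=d..<l. bv (j mod N) ((k + E + l - c*l)))"
        by (rule sum.shift_bounds_nat_ivl)
      also have "\<dots> = (\<Sum>k=d..<l. bv (j mod N) k)" using e by simp
      finally show ?thesis .
    qed
    also have "G ((j+1)*L) = sp ((j+1) mod N)" using G[of "(j+1)*L"] Lpos by simp
    also have "(\<Sum>n=(j+1)*L+1..<i+1+l. G n) = (\<Sum>k<d-1. bv ((j+1) mod N) k)"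
    proof -
      have "(\<Sum>n=(j+1)*L+1..<i+1+l. G n) = (\<Sum>n=0+((j+1)*L+1)..<(d-1)+((j+1)*L+1). G n)"
      proof -
        have "i+1+l = (d-1)+((j+1)*L+1)" using d_def i L False d1 by (simp add: algebra_simps)
        then show ?thesis by simp
      qed
      also have "\<dots> = (\<Sum>k=0..<d-1. G (k + ((j+1)*L+1)))" by (rule sum.shift_bounds_nat_ivl)
      also have "\<dots> = (\<Sum>k<d-1. bv ((j+1) mod N) k)"
      proof (unfold atLeast0LessThan, intro sum.cong refl)
        fix k assume k: "k \<in> {..<d-1}"
        have "k + ((j+1)*L+1) = (k+1) + (j+1)*L" by simp
        moreover have "k+1 < L" "k < l" proof -
          have lc: "l \<le> c*l" using c1 by simp
          have "k < d - 1" using k by simp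
          then show "k+1 < L" "k < l" using d1 L lc by linarith+
        qed
        ultimately have "(k + ((j+1)*L+1)) mod L = k+1" "(k + ((j+1)*L+1)) div L = j+1"
          using div_mult_self1[of L "k+1" "j+1"] Lpos
          by (simp_all only: mod_mult_self1 mod_less) simp
        then show "G (k + ((j+1)*L+1)) = bv ((j+1) mod N) k" using G \<open>k<l\<close> by simp
      qed
      finally show ?thesis .
    qed
    finally show ?thesis using False j_def r_def d_def by simp
  qed
qed



definition Dblk :: "nat \<Rightarrow> nat \<Rightarrow> nat \<Rightarrow> (nat \<Rightarrow> nat) \<Rightarrow> nat \<Rightarrow> nat list" where
  "Dblk l c s eta jj = (if jj \<le> s then 0 # wpow (o_word l (if jj=0 then 0 else eta jj)) c
     else 1 # wpow (u_word l (if jj = s+1 then l else eta (2*s+2-jj) - 1)) c)"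

definition spf :: "nat \<Rightarrow> nat \<Rightarrow> nat" where
  "spf s jj = (if jj \<le> s then 0 else 1)"

definition bvf :: "nat \<Rightarrow> nat \<Rightarrow> (nat \<Rightarrow> nat) \<Rightarrow> nat \<Rightarrow> nat \<Rightarrow> nat" where
  "bvf l s eta jj k = (if jj \<le> s then (if l - (if jj=0 then 0 else eta jj) \<le> k then 1 else 0)
     else (if k < (if jj = s+1 then l else eta (2*s+2-jj) - 1) then 1 else 0))"

lemma rev_upt_eq: "rev [1..<s+1] = map (\<lambda>j. 2*s+2-j) [s+2..<2*s+2]"
  by (rule nth_equalityI) (auto simp del: upt_Suc simp add: rev_nth nth_upt)

lemma upt_split: "[1..<2*s+2] = [1..<s+1] @ (s+1) # [s+2..<2*s+2]"
proof -
  have "[1..<2*s+2] = [1..<s+1] @ [s+1..<2*s+2]"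
    using upt_add_eq_append[of 1 "s+1" "s+1"] by (simp del: upt_Suc add: mult_2 add.assoc)
  moreover have "[s+1..<2*s+2] = (s+1) # [s+2..<2*s+2]" by (simp del: upt_Suc add: upt_rec)
  ultimately show ?thesis by (simp del: upt_Suc)
qed

lemma p_rot: "p_word l c s eta = rotate1 (concat (map (Dblk l c s eta) [0..<2*s+2]))"
proof -
  have a: "[0..<2*s+2] = 0 # [1..<2*s+2]" by (simp del: upt_Suc add: upt_rec)
  have b: "map (Dblk l c s eta) [Suc 0..<Suc s] = map (\<lambda>k. 0 # wpow (o_word l (eta k)) c) [Suc 0..<Suc s]"
    by (rule map_cong) (auto simp: Dblk_def)
  have d: "map (\<lambda>k. 1 # wpow (u_word l (eta k - 1)) c) (rev [1..<s+1]) = map (Dblk l c s eta) [s+2..<2*s+2]"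
    unfolding rev_upt_eq map_map by (rule map_cong) (auto simp del: upt_Suc simp add: Dblk_def)
  show ?thesis
    unfolding p_word_def a upt_split
    by (simp del: upt_Suc add: b d[symmetric, simplified] Dblk_def)
qed



lemma nth_o: "k < l \<Longrightarrow> x \<le> l \<Longrightarrow> o_word l x ! k = (if l - x \<le> k then 1 else 0)"
  by (auto simp: o_word_def nth_append)

lemma nth_u: "k < l \<Longrightarrow> y \<le> l \<Longrightarrow> u_word l y ! k = (if k < y then 1 else 0)"
  by (auto simp: u_word_def nth_append)

lemma len_o: "x \<le> l \<Longrightarrow> length (o_word l x) = l" by (simp add: o_word_def)
lemma len_u: "x \<le> l \<Longrightarrow> length (u_word l x) = l" by (simp add: u_word_def)

lemma Dblk_nth:
  assumes eb: "\<And>k. 1 \<le> k \<Longrightarrow> k \<le> s \<Longrightarrow> eta k \<le> l" and l1: "l \<ge> 1"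
    and r: "r < c*l+1" and jj: "jj < 2*s+2"
  shows "Dblk l c s eta jj ! r = (if r = 0 then spf s jj else bvf l s eta jj ((r-1) mod l))"
proof (cases r)
  case 0 then show ?thesis by (simp add: Dblk_def spf_def)
next
  case (Suc r')
  have rl: "r' < c*l" using r Suc by simp
  have ml: "r' mod l < l" using l1 by simp
  show ?thesis
  proof (cases "jj \<le> s")
    case True
    have x: "(if jj=0 then 0 else eta jj) \<le> l" using eb True by auto
    have "Dblk l c s eta jj ! r = wpow (o_word l (if jj=0 then 0 else eta jj)) c ! r'"
      using True Suc by (simp add: Dblk_def)
    also have "\<dots> = o_word l (if jj=0 then 0 else eta jj) ! (r' mod l)"
      by (rule nth_wpow[OF len_o[OF x] rl])
    also have "\<dots> = bvf l s eta jj (r' mod l)"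
      using nth_o[OF ml x] True by (simp add: bvf_def)
    finally show ?thesis using Suc by simp
  next
    case False
    have y: "(if jj = s+1 then l else eta (2*s+2-jj) - 1) \<le> l" using eb False jj
      by (auto simp: le_diff_conv intro: le_SucI)
    have "Dblk l c s eta jj ! r = wpow (u_word l (if jj = s+1 then l else eta (2*s+2-jj) - 1)) c ! r'"
      using False Suc by (simp add: Dblk_def)
    also have "\<dots> = u_word l (if jj = s+1 then l else eta (2*s+2-jj) - 1) ! (r' mod l)"
      by (rule nth_wpow[OF len_u[OF y] rl])
    also have "\<dots> = bvf l s eta jj (r' mod l)"
      using nth_u[OF ml y] False by (simp add: bvf_def)
    finally show ?thesis using Suc by simp
  qed
qed

lemma v_eq:
  assumes eb: "\<And>k. 1 \<le> k \<Longrightarrow> k \<le> s \<Longrightarrow> eta k \<le> l" and l1: "l \<ge> 1"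
  shows "v_seq l c s eta t = (let n = t+1; L = c*l+1; N = 2*s+2 in
     if n mod L = 0 then spf s ((n div L) mod N) else bvf l s eta ((n div L) mod N) ((n mod L - 1) mod l))"
proof -
  define L where "L = c*l+1"
  define N where "N = 2*s+2"
  define Q where "Q = concat (map (Dblk l c s eta) [0..<N])"
  have lenD: "length (Dblk l c s eta j) = L" if "j < N" for j
  proof (cases "j \<le> s")
    case True
    have x: "(if j=0 then 0 else eta j) \<le> l" using eb True by auto
    show ?thesis using True by (simp add: Dblk_def length_wpow[OF len_o[OF x]] L_def)
  next
    case False
    have y: "(if j = s+1 then l else eta (2*s+2-j) - 1) \<le> l" using eb False that N_def
      by (auto simp: le_diff_conv intro: le_SucI)
    have "length (wpow (u_word l (if j = s+1 then l else eta (2*s+2-j) - 1)) c) = c*l"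
      by (rule length_wpow[OF len_u[OF y]])
    then show ?thesis using False by (simp add: Dblk_def L_def)
  qed
  have lenQ: "length Q = N*L" unfolding Q_def using lenD
  proof -
    have "map (\<lambda>x. length (Dblk l c s eta x)) [0..<N] = map (\<lambda>x. L) [0..<N]"
      using lenD by (intro map_cong) auto
    then have "sum_list (map (\<lambda>x. length (Dblk l c s eta x)) [0..<N]) = N*L"
      by (simp only: sum_list_triv) simp
    then show "length (concat (map (Dblk l c s eta) [0..<N])) = N*L"
      by (simp add: length_concat o_def)
  qed
  have Lpos: "L > 0" "N > 0" using L_def N_def by auto
  have "v_seq l c s eta t = rotate1 Q ! (t mod (N*L))"
  proof -
    have pq: "p_word l c s eta = rotate1 Q" by (simp only: p_rot Q_def N_def)
    show ?thesis unfolding v_seq_def Let_def pq length_rotate1 lenQ ..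
  qed
  also have "\<dots> = Q ! ((t+1) mod (N*L))"
    using Lpos lenQ by (simp add: nth_rotate1 mod_Suc_eq)
  also have "\<dots> = Dblk l c s eta (((t+1) mod (N*L)) div L) ! (((t+1) mod (N*L)) mod L)"
    unfolding Q_def using Lpos lenD by (intro nth_concat_blocks) auto
  also have "((t+1) mod (N*L)) div L = ((t+1) div L) mod N"
    using mod_mult2_eq[of "t+1" L N] Lpos by (simp add: mult.commute)
  also have "((t+1) mod (N*L)) mod L = (t+1) mod L"
    by (simp add: mod_mod_cancel)
  also have "Dblk l c s eta (((t+1) div L) mod N) ! ((t+1) mod L) = (if (t+1) mod L = 0 then spf s (((t+1) div L) mod N) else bvf l s eta (((t+1) div L) mod N) (((t+1) mod L - 1) mod l))"
    by (rule Dblk_nth[OF eb l1]) (use Lpos in \<open>auto simp: L_def N_def\<close>)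
  finally show ?thesis by (simp add: L_def N_def Let_def)
qed



lemma ind_ge_sum0: "(\<Sum>k<b. (if t \<le> k then 1 else 0::nat)) = b - t"
  by (simp only: atLeast0LessThan[symmetric] ind_ge_sum)
lemma ind_lt_sum0: "(\<Sum>k<b. (if k < t then 1 else 0::nat)) = min b t"
  by (simp only: atLeast0LessThan[symmetric] ind_lt_sum)

lemma eta_mono:
  fixes s a b :: nat
  assumes "\<And>k. 1 \<le> k \<Longrightarrow> k < s \<Longrightarrow> eta k < eta (k + 1)"
  shows "1 \<le> a \<Longrightarrow> a < b \<Longrightarrow> b \<le> s \<Longrightarrow> (eta a :: nat) < eta b"
proof (induction b)
  case 0 then show ?case by simp
next
  case (Suc b)
  then show ?case using assms[of b] by (cases "a = b") auto
qed

lemma sqgt_char: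
  assumes mono: "\<And>a b. 1 \<le> a \<Longrightarrow> a < b \<Longrightarrow> b \<le> s \<Longrightarrow> (eta a :: nat) < eta b"
    and kk: "kk \<le> s" and lo: "kk = 0 \<or> eta kk \<le> y" and hi: "kk = s \<or> y < eta (kk+1)"
  shows "sqgt eta s y = kk"
proof -
  have "{k \<in> {1..s}. eta k \<le> y} = {1..kk}"
  proof (intro set_eqI iffI)
    fix k assume k: "k \<in> {k \<in> {1..s}. eta k \<le> y}"
    show "k \<in> {1..kk}"
    proof (rule ccontr)
      assume "k \<notin> {1..kk}"
      then have "kk < k" "kk \<noteq> s" using k by auto
      then have "eta (kk+1) \<le> eta k" using mono[of "kk+1" k] k by (cases "kk+1 = k") auto
      then show False using hi k \<open>kk \<noteq> s\<close> by auto
    qed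
  next
    fix k assume k: "k \<in> {1..kk}"
    then have "eta k \<le> eta kk" using mono[of k kk] kk by (cases "k = kk") auto
    then show "k \<in> {k \<in> {1..s}. eta k \<le> y}" using k kk lo by auto
  qed
  then show ?thesis by (simp add: sqgt_def)
qed

theorem mainTheorem1:
  fixes l c s :: nat and eta :: "nat \<Rightarrow> nat"
  assumes "l \<ge> 1" and "c \<ge> 1" and "s \<ge> 1"
    and "\<And>k. 1 \<le> k \<Longrightarrow> k < s \<Longrightarrow> eta k < eta (k + 1)"
    and "1 \<le> eta 1" and "eta s \<le> l"
  shows "\<forall>i::nat. sqgt eta s (\<Sum>t = i..<i + l. v_seq l c s eta t)
           = q_seq s ((i div (c * l + 1)) mod (2 * s + 2))"
proof
  fix i
  note l1 = assms(1) and c1 = assms(2) and s1 = assms(3)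
  have mono: "\<And>a b. 1 \<le> a \<Longrightarrow> a < b \<Longrightarrow> b \<le> s \<Longrightarrow> eta a < eta b"
    using eta_mono[of s eta] assms(4) by blast
  have eb: "\<And>k. 1 \<le> k \<Longrightarrow> k \<le> s \<Longrightarrow> eta k \<le> l"
  proof -
    fix k assume "1 \<le> k" "k \<le> s"
    then show "eta k \<le> l" using mono[of k s] assms(6) by (cases "k = s") auto
  qed
  have eb1: "\<And>k. 1 \<le> k \<Longrightarrow> k \<le> s \<Longrightarrow> 1 \<le> eta k"
  proof -
    fix k assume "1 \<le> k" "k \<le> s"
    then show "1 \<le> eta k" using mono[of 1 k] assms(5) by (cases "k = 1") auto
  qed
  define L where "L = c*l+1"
  define N where "N = 2*s+2"
  define G where "G n = (if n mod L = 0 then spf s ((n div L) mod N) else bvf l s eta ((n div L) mod N) ((n mod L - 1) mod l))" for n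
  have "(\<Sum>t = i..<i + l. v_seq l c s eta t) = (\<Sum>t = i..<i + l. G (t+1))"
    using v_eq[where s=s and eta=eta and l=l and c=c, OF eb l1]
    by (intro sum.cong refl) (simp add: G_def L_def N_def Let_def)
  also have "\<dots> = (\<Sum>n=i+1..<i+1+l. G n)"
    using sum.shift_bounds_nat_ivl[of G i 1 "i+l"] by simp
  also have "\<dots> = (if i mod L + l \<le> c*l then (\<Sum>k<l. bvf l s eta ((i div L) mod N) k)
     else (\<Sum>k=i mod L + l - c*l..<l. bvf l s eta ((i div L) mod N) k) + spf s ((i div L + 1) mod N)
       + (\<Sum>k<i mod L + l - c*l - 1. bvf l s eta ((i div L + 1) mod N) k))"
    by (rule window[OF L_def l1 c1]) (simp add: G_def)
  finally have S: "(\<Sum>t = i..<i + l. v_seq l c s eta t) = \<dots>" .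
  define jj where "jj = (i div L) mod N"
  define r where "r = i mod L"
  have jjN: "jj \<le> 2*s+1" using N_def jj_def by simp
  have jn0: "(i div L + 1) mod N = (jj + 1) mod N" unfolding jj_def by (simp add: mod_Suc_eq)
  have jn: "(i div L + 1) mod N = (if jj = 2*s+1 then 0 else jj+1)"
    unfolding jn0 using jjN N_def by auto
  have rL: "r \<le> c*l" using r_def L_def by simp
  have lcl: "l \<le> c*l" using c1 by simp
  define Sv where "Sv = (if r + l \<le> c*l then (\<Sum>k<l. bvf l s eta jj k)
     else (\<Sum>k=r + l - c*l..<l. bvf l s eta jj k) + spf s (if jj = 2*s+1 then 0 else jj+1)
       + (\<Sum>k<r + l - c*l - 1. bvf l s eta (if jj = 2*s+1 then 0 else jj+1) k))"
  have SV: "(\<Sum>t = i..<i + l. v_seq l c s eta t) = Sv"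
    unfolding S Sv_def jj_def[symmetric] r_def[symmetric] jn ..
  have Q: "q_seq s ((i div (c*l+1)) mod (2*s+2)) = q_seq s jj" by (simp add: jj_def L_def N_def)
  have "sqgt eta s Sv = q_seq s jj"
  proof -
    consider "jj = 0" | "1 \<le> jj \<and> jj < s" | "jj = s" | "jj = s+1" | "s+2 \<le> jj \<and> jj \<le> 2*s" | "jj = 2*s+1"
      using jjN by linarith
    then show ?thesis
    proof cases
      case 1
      have "Sv < eta 1" unfolding Sv_def using 1 s1 rL lcl l1 eb[of 1] eb1[of 1]
        by (auto simp add: bvf_def spf_def ind_ge_sum ind_ge_sum0 ind_lt_sum ind_lt_sum0)
      then show ?thesis using sqgt_char[OF mono, where kk=0 and y=Sv] 1 by (simp add: q_seq_def)
    next
      case 2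
      have m: "eta jj < eta (jj+1)" using assms(4)[of jj] 2 by simp
      have "eta jj \<le> Sv" "Sv < eta (jj+1)" unfolding Sv_def using 2 s1 rL lcl l1 eb[of jj] eb1[of jj] eb[of "jj+1"] eb1[of "jj+1"] m
        by (auto simp add: bvf_def spf_def ind_ge_sum ind_ge_sum0 ind_lt_sum ind_lt_sum0)
      then show ?thesis using sqgt_char[OF mono, where kk=jj and y=Sv] 2 by (simp add: q_seq_def)
    next
      case 3
      have "eta s \<le> Sv" unfolding Sv_def using 3 s1 rL lcl l1 eb[of s] eb1[of s]
        by (auto simp add: bvf_def spf_def ind_ge_sum ind_ge_sum0 ind_lt_sum ind_lt_sum0)
      then show ?thesis using sqgt_char[OF mono, where kk=s and y=Sv] 3 by (simp add: q_seq_def)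
    next
      case 4
      have b1: "bvf l s eta (Suc s) x = (if x < l then 1 else 0)" for x by (simp add: bvf_def)
      have b2: "bvf l s eta (Suc (Suc s)) x = (if x < eta s - 1 then 1 else 0)" for x using 4 by (simp add: bvf_def)
      have nz: "jj \<noteq> 2*s+1" using 4 s1 by simp
      have "eta s \<le> Sv" unfolding Sv_def using 4 s1 rL lcl l1 eb[of s] eb1[of s] nz
        by (auto simp add: b1 b2 spf_def ind_ge_sum ind_ge_sum0 ind_lt_sum ind_lt_sum0)
      then show ?thesis using sqgt_char[OF mono, where kk=s and y=Sv] 4 by (simp add: q_seq_def)
    next
      case 5
      define k where "k = 2*s+1-jj"
      have k: "1 \<le> k" "k < s" "jj = 2*s+1-k" using 5 k_def by auto
      have b1: "bvf l s eta jj x = (if x < eta (k+1) - 1 then 1 else 0)" for x using 5 k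
        by (simp add: bvf_def)
      have b2: "bvf l s eta (Suc jj) x = (if x < eta k - 1 then 1 else 0)" for x using 5 k
        by (simp add: bvf_def)
      have nz: "jj \<noteq> 2*s+1" using 5 by simp
      have m: "eta k < eta (k+1)" using assms(4)[of k] k by simp
      have "eta k \<le> Sv" "Sv < eta (k+1)" unfolding Sv_def using 5 s1 rL lcl l1 eb[of k] eb1[of k] eb[of "k+1"] eb1[of "k+1"] m nz k(1,2)
        by (auto simp add: b1 b2 spf_def ind_ge_sum ind_ge_sum0 ind_lt_sum ind_lt_sum0)
      then show ?thesis using sqgt_char[OF mono, where kk=k and y=Sv] 5 k by (simp add: q_seq_def)
    next
      case 6
      have b1: "bvf l s eta jj x = (if x < eta 1 - 1 then 1 else 0)" for x using 6 s1 by (simp add: bvf_def)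
      have "Sv < eta 1" unfolding Sv_def using 6 s1 rL lcl l1 eb[of 1] eb1[of 1]
        by (auto simp add: b1 bvf_def spf_def ind_ge_sum ind_ge_sum0 ind_lt_sum ind_lt_sum0)
      then show ?thesis using sqgt_char[OF mono, where kk=0 and y=Sv] 6 by (simp add: q_seq_def)
    qed
  qed
  then show "sqgt eta s (\<Sum>t = i..<i + l. v_seq l c s eta t) = q_seq s ((i div (c * l + 1)) mod (2 * s + 2))"
    unfolding SV Q .
qed


end
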